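(* Let $\bm H$ be a finite-dimensional Hilbert space, let $\rho_{\rm i}=\sum_a p_{\rm i}(a)|\psi_a\rangle\langle\psi_a|$ and $\rho_0=\sum_b p_0(b)|\phi_b\rangle\langle\phi_b|$ be density operators with orthonormal eigenbases $\{|\psi_a\rangle\}$, $\{|\phi_b\rangle\}$. Let $H(t)$, $0\le t\le\tau$, be a (continuous) family of Hermitian operators on $\bm H$, $U:=\mathrm{T}\exp(-\mathrm{i}\int_0^\tau H(t)\,dt)$ the time-ordered exponential, and $\rho_{\rm f}:=U\rho_{\rm i}U^\dagger$. Let $\Theta$ be an anti-unitary operator on $\bm H$ with $\Theta^2=I$, set $\tilde H(t):=\Theta H(t)\Theta$, $\tilde U:=\mathrm{T}\exp(-\mathrm{i}\int_0^\tau\tilde H(\tau-t)\,dt)$, $|\tilde\psi_a\rangle:=\Theta|\psi_a\rangle$, $|\tilde\phi_b\rangle:=\Theta|\phi_b\rangle$. Define the forward and backward joint probabilities $$p(a,b):=|\langle\phi_b|U|\psi_a\rangle|^2\,p_{\rm i}(a),\qquad \tilde p(b,a):=|\langle\tilde\psi_a|\tilde U|\tilde\phi_b\rangle|^2\,p_0(b).$$ Then $$\sum_{a,b}p(a,b)\ln\frac{p(a,b)}{\tilde p(b,a)}=S(\rho_{\rm f}\|\rho_0).$$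
   Context: An anti-unitary operator is an anti-linear map preserving inner products up to complex conjugation. Conventions: $0\ln(0/x)=0$ and $x\ln(x/0)=+\infty$ for $x>0$. The quantum relative entropy is $S(\rho\|\sigma):=\mathrm{tr}[\rho\ln\rho]-\mathrm{tr}[\rho\ln\sigma]$, defined as $+\infty$ if there is $|\psi\rangle$ with $\sigma|\psi\rangle=0$ and $\langle\psi|\rho|\psi\rangle\ne0$. *)

theory Defs
  imports "HOL-Analysis.Analysis"
begin

text \<open>Finite-dimensional Hilbert space: complex^'n with the standard inner product
  (antilinear in the first argument). Operators are matrices complex^'n^'n.\<close>

definition cinner :: "complex^'n \<Rightarrow> complex^'n \<Rightarrow> complex" where
  "cinner x y = (\<Sum>i\<in>UNIV. cnj (x$i) * y$i)"

definition adjoint_mat :: "complex^'n^'n \<Rightarrow> complex^'n^'n" where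
  "adjoint_mat A = (\<chi> i j. cnj (A$j$i))"

definition hermitian :: "complex^'n^'n \<Rightarrow> bool" where
  "hermitian A \<longleftrightarrow> adjoint_mat A = A"

definition ctrace :: "complex^'n^'n \<Rightarrow> complex" where
  "ctrace A = (\<Sum>i\<in>UNIV. A$i$i)"

definition smult_mat :: "complex \<Rightarrow> complex^'n^'n \<Rightarrow> complex^'n^'n" where
  "smult_mat c A = (\<chi> i j. c * A$i$j)"

definition outer :: "complex^'n \<Rightarrow> complex^'n \<Rightarrow> complex^'n^'n" where
  "outer x y = (\<chi> i j. x$i * cnj (y$j))"

definition cmatrix :: "(complex^'n \<Rightarrow> complex^'n) \<Rightarrow> complex^'n^'n" where
  "cmatrix f = (\<chi> i j. (f (axis j 1))$i)"

definition orthonormal_basis :: "('n::finite \<Rightarrow> complex^'n) \<Rightarrow> bool" where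
  "orthonormal_basis e \<longleftrightarrow> (\<forall>a b. cinner (e a) (e b) = (if a = b then 1 else 0))"

definition spectral_op :: "('n::finite \<Rightarrow> real) \<Rightarrow> ('n \<Rightarrow> complex^'n) \<Rightarrow> complex^'n^'n" where
  "spectral_op p e = (\<Sum>a\<in>UNIV. smult_mat (complex_of_real (p a)) (outer (e a) (e a)))"

definition antiunitary :: "(complex^'n \<Rightarrow> complex^'n) \<Rightarrow> bool" where
  "antiunitary \<Theta> \<longleftrightarrow>
     (\<forall>x y. \<Theta> (x + y) = \<Theta> x + \<Theta> y) \<and>
     (\<forall>c x. \<Theta> (c *s x) = cnj c *s \<Theta> x) \<and>
     (\<forall>x y. cinner (\<Theta> x) (\<Theta> y) = cnj (cinner x y)) \<and>
     bij \<Theta>"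

text \<open>Uf is the propagator of the time-dependent Hamiltonian H on [0,tau]:
  Uf(0) = I and dUf/dt = -i H(t) Uf(t); then Uf(tau) = T exp(-i int_0^tau H(t) dt).\<close>
definition propagator :: "(real \<Rightarrow> complex^'n^'n) \<Rightarrow> real \<Rightarrow> (real \<Rightarrow> complex^'n^'n) \<Rightarrow> bool" where
  "propagator H \<tau> Uf \<longleftrightarrow> Uf 0 = mat 1 \<and>
     (\<forall>t\<in>{0..\<tau>}. (Uf has_vector_derivative smult_mat (- \<i>) (H t ** Uf t)) (at t within {0..\<tau>}))"

text \<open>Functional calculus for a Hermitian matrix via an orthonormal eigenbasis
  (independent of the choice of eigenbasis).\<close>
definition mfun :: "(real \<Rightarrow> real) \<Rightarrow> complex^'n^'n \<Rightarrow> complex^'n^'n" where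
  "mfun f A = (let (e, l) = (SOME (e, l). orthonormal_basis e \<and>
                   (\<forall>k. A *v e k = complex_of_real (l k) *s e k))
               in (\<Sum>k\<in>UNIV. smult_mat (complex_of_real (f (l k))) (outer (e k) (e k))))"

text \<open>With ln 0 = 0 in Isabelle, x*ln x gives 0 ln 0 = 0,
  and ln sigma is taken on the support of sigma (kernel contributes 0).\<close>
definition rel_entropy :: "complex^'n^'n \<Rightarrow> complex^'n^'n \<Rightarrow> ereal" where
  "rel_entropy \<rho> \<sigma> =
     (if \<exists>\<psi>. \<sigma> *v \<psi> = 0 \<and> cinner \<psi> (\<rho> *v \<psi>) \<noteq> 0 then \<infinity>
      else ereal (Re (ctrace (mfun (\<lambda>x. x * ln x) \<rho>) - ctrace (\<rho> ** mfun ln \<sigma>))))"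

definition kl_term :: "real \<Rightarrow> real \<Rightarrow> ereal" where
  "kl_term x y = (if x = 0 then 0 else if y = 0 then \<infinity> else ereal (x * ln (x / y)))"

end

theory Submission imports Defs begin

lemma cinner_add_left: "cinner (x + y) z = cinner x z + cinner y z"
  by (simp add: cinner_def sum.distrib distrib_right)
lemma cinner_add_right: "cinner z (x + y) = cinner z x + cinner z y"
  by (simp add: cinner_def sum.distrib distrib_left)
lemma cinner_smult_left: "cinner (c *s x) y = cnj c * cinner x y"
  by (simp add: cinner_def sum_distrib_left mult.assoc)
lemma cinner_smult_right: "cinner x (c *s y) = c * cinner x y"
  by (simp add: cinner_def sum_distrib_left mult.left_commute)
lemma scaleR_smult: "r *\<^sub>R (x::complex^'n) = complex_of_real r *s x"
  unfolding vec_eq_iff vector_scaleR_component vector_smult_component by (simp add: scaleR_conv_of_real)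
lemma cinner_scaleR_left: "cinner (r *\<^sub>R x) y = of_real r * cinner x y"
  by (simp add: scaleR_smult cinner_smult_left)
lemma cinner_scaleR_right: "cinner x (r *\<^sub>R y) = of_real r * cinner x y"
  by (simp add: scaleR_smult cinner_smult_right)
lemma cinner_zero_left[simp]: "cinner 0 y = 0" by (simp add: cinner_def)
lemma cinner_zero_right[simp]: "cinner y 0 = 0" by (simp add: cinner_def)
lemma cinner_sum_left: "cinner (\<Sum>k\<in>A. f k) y = (\<Sum>k\<in>A. cinner (f k) y)"
  by (induct A rule: infinite_finite_induct) (simp_all add: cinner_add_left)
lemma cinner_sum_right: "cinner y (\<Sum>k\<in>A. f k) = (\<Sum>k\<in>A. cinner y (f k))"
  by (induct A rule: infinite_finite_induct) (simp_all add: cinner_add_right)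
lemma cinner_cnj: "cnj (cinner x y) = cinner y x"
  by (simp add: cinner_def mult.commute)
lemma cinner_minus_left: "cinner (- x) y = - cinner x y"
  by (simp add: cinner_def sum_negf)
lemma cinner_minus_right: "cinner x (- y) = - cinner x y"
  by (simp add: cinner_def sum_negf)

lemma cinner_adjoint: "cinner x (A *v y) = cinner (adjoint_mat A *v x) y"
  unfolding cinner_def adjoint_mat_def matrix_vector_mult_def
  apply (simp add: sum_distrib_left sum_distrib_right mult_ac)
  apply (rule sum.swap)
  done

lemma bilinear_cinner: "bilinear cinner"
  unfolding bilinear_def
  by (auto intro!: linearI simp: cinner_add_left cinner_add_right cinner_scaleR_left cinner_scaleR_right) (simp_all add: scaleR_conv_of_real)

lemma bounded_bilinear_cinner: "bounded_bilinear cinner"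
  using bilinear_cinner bilinear_conv_bounded_bilinear by blast

lemma bounded_linear_mv: "bounded_linear (\<lambda>M::complex^'n^'m. M *v y)"
  unfolding linear_conv_bounded_linear[symmetric]
  by (rule linearI) (auto simp: vec_eq_iff matrix_vector_mult_def sum.distrib distrib_right scaleR_sum_right)

lemma antiunitary_scaleR: "antiunitary T \<Longrightarrow> T (r *\<^sub>R x) = r *\<^sub>R T x"
proof -
  assume "antiunitary T"
  then have "T (complex_of_real r *s x) = cnj (complex_of_real r) *s T x"
    by (simp add: antiunitary_def)
  moreover have "\<And>z::complex^'n. complex_of_real r *s z = r *\<^sub>R z"
    by (simp add: scaleR_smult)
  ultimately show ?thesis by (metis complex_cnj_complex_of_real)
qed

lemma bounded_linear_anti: "antiunitary T \<Longrightarrow> bounded_linear T"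
  unfolding linear_conv_bounded_linear[symmetric]
  by (rule linearI) (auto simp: antiunitary_def antiunitary_scaleR)

lemma smult_mat_mv: "smult_mat c M *v y = c *s (M *v y)"
  by (simp add: smult_mat_def matrix_vector_mult_def vec_eq_iff sum_distrib_left mult.assoc)

lemma cmatrix_works:
  assumes add: "\<And>x y. f (x+y) = f x + f y" and hom: "\<And>c x. f (c *s x) = c *s f x"
  shows "cmatrix f *v x = f (x::complex^'n)"
proof -
  have sumf: "f (\<Sum>j\<in>A. g j) = (\<Sum>j\<in>A. f (g j))" for A and g :: "'n \<Rightarrow> complex^'n"
  proof (induct A rule: infinite_finite_induct)
    case (infinite A) then show ?case using hom[of 0 0] by simp
  next
    case empty then show ?case using hom[of 0 0] by simp
  next
    case (insert a A) then show ?case by (simp add: add)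
  qed
  have "f x = f (\<Sum>j\<in>UNIV. x$j *s axis j 1)" by (simp add: basis_expansion)
  also have "\<dots> = (\<Sum>j\<in>UNIV. x$j *s f (axis j 1))" by (simp add: sumf hom)
  finally show ?thesis
    by (simp add: vec_eq_iff cmatrix_def matrix_vector_mult_def mult.commute)
qed

lemma prop_deriv_mv:
  assumes "propagator H \<tau> U" "t \<in> {0..\<tau>}"
  shows "((\<lambda>s. U s *v y) has_vector_derivative (- \<i>) *s (H t *v (U t *v y))) (at t within {0..\<tau>})"
proof -
  have "(U has_vector_derivative smult_mat (- \<i>) (H t ** U t)) (at t within {0..\<tau>})"
    using assms by (auto simp: propagator_def)
  from bounded_linear.has_vector_derivative[OF bounded_linear_mv this, of y]
  show ?thesis by (simp add: smult_mat_mv matrix_vector_mul_assoc)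
qed

lemma prop_unitary:
  assumes P: "propagator H \<tau> U" and herm: "\<forall>t\<in>{0..\<tau>}. hermitian (H t)" and t: "t \<in> {0..\<tau>}"
  shows "cinner (U t *v x) (U t *v y) = cinner x y"
proof -
  have d: "((\<lambda>s. cinner (U s *v x) (U s *v y)) has_vector_derivative 0) (at s within {0..\<tau>})"
    if s: "s \<in> {0..\<tau>}" for s
  proof -
    have h: "adjoint_mat (H s) = H s" using herm s by (simp add: hermitian_def)
    show ?thesis
      apply (rule has_vector_derivative_eq_rhs)
       apply (rule bounded_bilinear.has_vector_derivative[OF bounded_bilinear_cinner
             prop_deriv_mv[OF P s] prop_deriv_mv[OF P s]])
      using cinner_adjoint[of "U s *v x" "H s" "U s *v y"] h
      apply (simp only: cinner_smult_left cinner_smult_right)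
      apply simp
      done
  qed
  obtain c where "\<And>s. s \<in> {0..\<tau>} \<Longrightarrow> cinner (U s *v x) (U s *v y) = c"
    using has_vector_derivative_zero_constant[of "{0..\<tau>}", OF convex_real_interval(5) d] by blast
  moreover have "0 \<in> {0..\<tau>}" using t by auto
  ultimately show ?thesis using t P by (metis matrix_vector_mul_lid propagator_def)
qed

lemma anti_add: "antiunitary T \<Longrightarrow> T (x + y) = T x + T y" by (simp add: antiunitary_def)
lemma anti_smult: "antiunitary T \<Longrightarrow> T (c *s x) = cnj c *s T x" by (simp add: antiunitary_def)
lemma anti_inner: "antiunitary T \<Longrightarrow> cinner (T x) (T y) = cnj (cinner x y)" by (simp add: antiunitary_def)

lemma cmatrix_conj:
  assumes T: "antiunitary T"
  shows "cmatrix (\<lambda>x. T (A *v T x)) *v w = T (A *v T w)"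
  by (rule cmatrix_works) (simp_all add: anti_add[OF T] anti_smult[OF T] matrix_vector_right_distrib vector_scalar_commute)

lemma time_rev:
  assumes P: "propagator H \<tau> U" and herm: "\<forall>t\<in>{0..\<tau>}. hermitian (H t)"
    and T: "antiunitary \<Theta>" and Tsq: "\<forall>x. \<Theta> (\<Theta> x) = x"
    and Pt: "propagator (\<lambda>t. cmatrix (\<lambda>x. \<Theta> (H (\<tau> - t) *v \<Theta> x))) \<tau> Ut"
    and tau: "0 \<le> \<tau>"
  shows "cinner y (\<Theta> (Ut \<tau> *v \<Theta> x)) = cinner (U \<tau> *v y) x"
proof -
  define g where "g t = cinner (U (\<tau> - t) *v y) (\<Theta> (Ut t *v \<Theta> x))" for t
  have img: "(\<lambda>t. \<tau> - t) ` {0..\<tau>} = {0..\<tau>}"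
    by (auto intro!: image_eqI[where x="\<tau> - _"])
  have d: "(g has_vector_derivative 0) (at t within {0..\<tau>})" if t: "t \<in> {0..\<tau>}" for t
  proof -
    have t': "\<tau> - t \<in> {0..\<tau>}" using t by auto
    have h: "adjoint_mat (H (\<tau> - t)) = H (\<tau> - t)" using herm t' by (simp add: hermitian_def)
    have f: "((\<lambda>t. \<tau> - t) has_vector_derivative (-1)) (at t within {0..\<tau>})"
      by (auto intro!: derivative_eq_intros)
    have d1: "((\<lambda>t. U (\<tau> - t) *v y) has_vector_derivative
        (-1) *\<^sub>R ((- \<i>) *s (H (\<tau> - t) *v (U (\<tau> - t) *v y)))) (at t within {0..\<tau>})"
      using vector_diff_chain_within[OF f, of "\<lambda>s. U s *v y"] prop_deriv_mv[OF P t', of y] img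
      by (simp add: o_def) (metis minus_minus)
    have d2: "((\<lambda>t. \<Theta> (Ut t *v \<Theta> x)) has_vector_derivative
        \<Theta> ((- \<i>) *s (cmatrix (\<lambda>x. \<Theta> (H (\<tau> - t) *v \<Theta> x)) *v (Ut t *v \<Theta> x)))) (at t within {0..\<tau>})"
      by (rule bounded_linear.has_vector_derivative[OF bounded_linear_anti[OF T] prop_deriv_mv[OF Pt t]])
    define v where "v = \<Theta> (Ut t *v \<Theta> x)"
    have e: "\<Theta> ((- \<i>) *s (cmatrix (\<lambda>x. \<Theta> (H (\<tau> - t) *v \<Theta> x)) *v (Ut t *v \<Theta> x)))
        = \<i> *s (H (\<tau> - t) *v v)"
      unfolding cmatrix_conj[OF T] anti_smult[OF T] v_def using Tsq by simp
    show ?thesis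
      unfolding g_def
      apply (rule has_vector_derivative_eq_rhs)
       apply (rule bounded_bilinear.has_vector_derivative[OF bounded_bilinear_cinner d1 d2])
      unfolding e v_def[symmetric]
      using cinner_adjoint[of "U (\<tau> - t) *v y" "H (\<tau> - t)" v] h
      apply (simp only: cinner_smult_left cinner_smult_right cinner_scaleR_left)
      apply simp
      done
  qed
  obtain c where "\<And>s. s \<in> {0..\<tau>} \<Longrightarrow> g s = c"
    using has_vector_derivative_zero_constant[of "{0..\<tau>}", OF convex_real_interval(5) d] by blast
  then have "g \<tau> = g 0" using tau by auto
  then show ?thesis using P Pt Tsq by (simp add: g_def propagator_def)
qed

lemma sum_mv: "(\<Sum>k\<in>A. M k) *v x = (\<Sum>k\<in>A. M k *v (x::complex^'n))"
  by (induct A rule: infinite_finite_induct) (simp_all add: matrix_vector_mult_add_rdistrib)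
lemma mv_sum: "M *v (\<Sum>k\<in>A. v k) = (\<Sum>k\<in>A. M *v (v k::complex^'n))"
  by (induct A rule: infinite_finite_induct) (simp_all add: matrix_vector_right_distrib)
lemma outer_mv: "outer x y *v z = cinner y z *s x"
  by (simp add: outer_def cinner_def matrix_vector_mult_def vec_eq_iff sum_distrib_left mult_ac)
lemma spectral_mv: "spectral_op p e *v x = (\<Sum>a\<in>UNIV. (of_real (p a) * cinner (e a) x) *s e a)"
  by (simp add: spectral_op_def sum_mv smult_mat_mv outer_mv)

lemma onb_inner: "orthonormal_basis e \<Longrightarrow> cinner (e a) (e b) = (if a = b then 1 else 0)"
  by (simp add: orthonormal_basis_def)

lemma onb_res:
  assumes "orthonormal_basis (e::'n::finite \<Rightarrow> complex^'n)"
  shows "(\<Sum>k\<in>UNIV. outer (e k) (e k)) = mat 1"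
proof -
  define E :: "complex^'n^'n" where "E = (\<chi> i k. e k $ i)"
  have "adjoint_mat E ** E = mat 1"
    using assms unfolding vec_eq_iff
    by (auto simp: E_def adjoint_mat_def matrix_matrix_mult_def mat_def orthonormal_basis_def cinner_def)
  then have "E ** adjoint_mat E = mat 1" using matrix_left_right_inverse by blast
  then show ?thesis
    by (simp add: vec_eq_iff E_def adjoint_mat_def matrix_matrix_mult_def outer_def)
qed

lemma onb_expand:
  assumes "orthonormal_basis e"
  shows "x = (\<Sum>k\<in>UNIV. cinner (e k) x *s e k)"
proof -
  have "x = mat 1 *v x" by simp
  also have "\<dots> = (\<Sum>k\<in>UNIV. cinner (e k) x *s e k)"
    unfolding onb_res[OF assms, symmetric] sum_mv outer_mv ..
  finally show ?thesis .
qed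

lemma parseval:
  assumes "orthonormal_basis e"
  shows "complex_of_real (\<Sum>k\<in>UNIV. (cmod (cinner (e k) x))\<^sup>2) = cinner x x"
proof -
  have "cinner x x = cinner x (\<Sum>k\<in>UNIV. cinner (e k) x *s e k)"
    using onb_expand[OF assms, of x] by simp
  also have "\<dots> = (\<Sum>k\<in>UNIV. cinner (e k) x * cnj (cinner (e k) x))"
    by (simp add: cinner_sum_right cinner_smult_right cinner_cnj)
  also have "\<dots> = complex_of_real (\<Sum>k\<in>UNIV. (cmod (cinner (e k) x))\<^sup>2)"
    by (simp only: of_real_sum complex_norm_square)
  finally show ?thesis by simp
qed

lemma spectral_eigen:
  assumes "orthonormal_basis e"
  shows "spectral_op p e *v e k = of_real (p k) *s e k"
  by (simp add: spectral_mv onb_inner[OF assms] if_distrib[of "\<lambda>x. _ * x"] if_distrib[of "\<lambda>x. x *s _"] cong: if_cong)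

lemma spectral_inner:
  assumes "orthonormal_basis e"
  shows "cinner (e k) (spectral_op p e *v y) = of_real (p k) * cinner (e k) y"
  by (simp add: spectral_mv cinner_sum_right cinner_smult_right onb_inner[OF assms]
      if_distrib[of "\<lambda>x. _ * x"] cong: if_cong)

lemma eq_on_basis:
  assumes e: "orthonormal_basis e" and h: "\<And>k. M *v e k = N *v e k"
  shows "M = (N::complex^'n^'n)"
proof -
  have "M *v x = N *v x" for x
  proof -
    have "M *v (\<Sum>k\<in>UNIV. cinner (e k) x *s e k) = N *v (\<Sum>k\<in>UNIV. cinner (e k) x *s e k)"
      by (simp add: mv_sum vector_scalar_commute h)
    then show ?thesis using onb_expand[OF e, of x] by simp
  qed
  then show ?thesis by (simp add: matrix_eq)
qed

lemma smult_sum: "c *s (\<Sum>k\<in>A. v k) = (\<Sum>k\<in>A. c *s (v k::complex^'n))"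
  by (induct A rule: infinite_finite_induct) (simp_all add: vector_add_ldistrib)

lemma spec_of_eigen:
  assumes e: "orthonormal_basis e" and ev: "\<And>k. A *v e k = of_real (l k) *s e k"
  shows "A = spectral_op l e"
  by (rule eq_on_basis[OF e]) (simp add: ev spectral_eigen[OF e])

lemma spec_unique:
  assumes e: "orthonormal_basis e" and ev: "\<And>k. A *v e k = of_real (l k) *s e k"
    and e': "orthonormal_basis e'" and ev': "\<And>k. A *v e' k = of_real (l' k) *s e' k"
  shows "spectral_op (\<lambda>k. f (l k)) e = spectral_op (\<lambda>k. f (l' k)) e'"
proof (rule eq_on_basis[OF e'])
  fix j
  have A: "A = spectral_op l e" by (rule spec_of_eigen[OF e ev])
  have tm: "(of_real (f (l k)) * cinner (e k) (e' j)) *s e k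
      = (of_real (f (l' j)) * cinner (e k) (e' j)) *s e k" for k
  proof (cases "cinner (e k) (e' j) = 0")
    case False
    have "cinner (e k) (A *v e' j) = of_real (l k) * cinner (e k) (e' j)"
      unfolding A by (rule spectral_inner[OF e])
    moreover have "cinner (e k) (A *v e' j) = of_real (l' j) * cinner (e k) (e' j)"
      by (simp add: ev' cinner_smult_right)
    ultimately have "l k = l' j" using False by simp
    then show ?thesis by simp
  qed simp
  have "spectral_op (\<lambda>k. f (l k)) e *v e' j
      = (\<Sum>k\<in>UNIV. (of_real (f (l' j)) * cinner (e k) (e' j)) *s e k)"
    by (simp add: spectral_mv tm)
  also have "\<dots> = of_real (f (l' j)) *s (\<Sum>k\<in>UNIV. cinner (e k) (e' j) *s e k)"
    by (simp add: smult_sum vector_smult_assoc)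
  also have "\<dots> = of_real (f (l' j)) *s e' j"
    by (simp only: onb_expand[OF e, of "e' j", symmetric])
  finally show "spectral_op (\<lambda>k. f (l k)) e *v e' j = spectral_op (\<lambda>k. f (l' k)) e' *v e' j"
    by (simp add: spectral_eigen[OF e'])
qed

lemma mfun_eq:
  assumes e: "orthonormal_basis e0" and ev: "\<And>k. A *v e0 k = of_real (l0 k) *s e0 k"
  shows "mfun f A = spectral_op (\<lambda>k. f (l0 k)) e0"
proof -
  define P where "P = (\<lambda>(e::'a \<Rightarrow> complex^'a, l::'a \<Rightarrow> real). orthonormal_basis e \<and>
                   (\<forall>k. A *v e k = complex_of_real (l k) *s e k))"
  have "P (e0, l0)" using e ev by (simp add: P_def)
  then have "P (SOME x. P x)" by (rule someI)
  moreover obtain e l where el: "(SOME x. P x) = (e, l)" by (cases "SOME x. P x") auto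
  ultimately have "orthonormal_basis e" "\<And>k. A *v e k = complex_of_real (l k) *s e k"
    by (auto simp: P_def)
  moreover have "mfun f A = spectral_op (\<lambda>k. f (l k)) e"
    using el unfolding mfun_def spectral_op_def P_def by simp
  ultimately show ?thesis using spec_unique[OF _ _ e ev] by metis
qed

lemma adj_adj: "adjoint_mat (adjoint_mat A) = A"
  by (simp add: adjoint_mat_def vec_eq_iff)

lemma conj_spectral: "A ** spectral_op p e ** adjoint_mat A = spectral_op p (\<lambda>a. A *v e a)"
  unfolding matrix_eq
  by (simp add: matrix_vector_mul_assoc[symmetric] spectral_mv mv_sum vector_scalar_commute
      cinner_adjoint adj_adj)

lemma ctrace_sum: "ctrace (\<Sum>k\<in>A. M k) = (\<Sum>k\<in>A. ctrace (M k))"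
  unfolding ctrace_def by (simp add: sum.swap[of _ A])
lemma ctrace_smult: "ctrace (smult_mat c M) = c * ctrace M"
  by (simp add: ctrace_def smult_mat_def sum_distrib_left)
lemma ctrace_outer: "ctrace (outer x y) = cinner y x"
  by (simp add: ctrace_def outer_def cinner_def mult.commute)
lemma ctrace_mul_outer: "ctrace (R ** outer x y) = cinner y (R *v x)"
  by (simp add: ctrace_def outer_def cinner_def matrix_matrix_mult_def matrix_vector_mult_def
      sum_distrib_left mult_ac)
lemma mul_sum: "R ** (\<Sum>k\<in>A. M k) = (\<Sum>k\<in>A. R ** (M k::complex^'n^'n))"
  by (induct A rule: infinite_finite_induct) (simp_all add: matrix_add_ldistrib)
lemma mul_smult: "R ** smult_mat c M = smult_mat c (R ** M)"
  by (simp add: smult_mat_def matrix_matrix_mult_def vec_eq_iff sum_distrib_left mult_ac)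

lemma ctrace_spectral:
  assumes "orthonormal_basis e"
  shows "ctrace (spectral_op p e) = (\<Sum>a\<in>UNIV. of_real (p a))"
  using assms by (simp add: spectral_op_def ctrace_sum ctrace_smult ctrace_outer onb_inner)

lemma ctrace_mul_spectral:
  "ctrace (R ** spectral_op q e) = (\<Sum>b\<in>UNIV. of_real (q b) * cinner (e b) (R *v e b))"
  by (simp add: spectral_op_def mul_sum mul_smult ctrace_sum ctrace_smult ctrace_mul_outer)


lemma kl_fin:
  assumes "x \<ge> 0" "y \<ge> 0" "n \<ge> 0" "n * x \<noteq> 0 \<Longrightarrow> y \<noteq> 0"
  shows "kl_term (n * x) (n * y) = ereal (n * x * ln x - n * x * ln y)"
proof (cases "n * x = 0")
  case True then show ?thesis by (simp add: kl_term_def)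
next
  case False
  then have "y > 0" "x > 0" "n > 0" using assms by auto
  then show ?thesis using False
    by (simp add: kl_term_def ln_div ln_mult right_diff_distrib)
qed

theorem theorem5p3:
  fixes pi p0 :: "'n::finite \<Rightarrow> real"
    and \<psi> \<phi> :: "'n \<Rightarrow> complex^'n"
    and H :: "real \<Rightarrow> complex^'n^'n"
    and \<tau> :: real
    and Uf Utf :: "real \<Rightarrow> complex^'n^'n"
    and \<Theta> :: "complex^'n \<Rightarrow> complex^'n"
  assumes pi_nonneg: "\<forall>a. pi a \<ge> 0" and pi_sum: "(\<Sum>a\<in>UNIV. pi a) = 1"
    and p0_nonneg: "\<forall>b. p0 b \<ge> 0" and p0_sum: "(\<Sum>b\<in>UNIV. p0 b) = 1"
    and onb_psi: "orthonormal_basis \<psi>" and onb_phi: "orthonormal_basis \<phi>"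
    and tau: "0 \<le> \<tau>"
    and H_cont: "continuous_on {0..\<tau>} H"
    and H_herm: "\<forall>t\<in>{0..\<tau>}. hermitian (H t)"
    and U_prop: "propagator H \<tau> Uf"
    and Theta: "antiunitary \<Theta>" and Theta_sq: "\<forall>x. \<Theta> (\<Theta> x) = x"
    and Ut_prop: "propagator (\<lambda>t. cmatrix (\<lambda>x. \<Theta> (H (\<tau> - t) *v \<Theta> x))) \<tau> Utf"
  shows "(\<Sum>a\<in>UNIV. \<Sum>b\<in>UNIV.
            kl_term ((cmod (cinner (\<phi> b) (Uf \<tau> *v \<psi> a)))\<^sup>2 * pi a)
                    ((cmod (cinner (\<Theta> (\<psi> a)) (Utf \<tau> *v \<Theta> (\<phi> b))))\<^sup>2 * p0 b))
         = rel_entropy (Uf \<tau> ** spectral_op pi \<psi> ** adjoint_mat (Uf \<tau>)) (spectral_op p0 \<phi>)"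
proof -
  define U where "U = Uf \<tau>"
  define V where "V a = U *v \<psi> a" for a
  define c where "c a b = cinner (\<phi> b) (V a)" for a b
  define n where "n a b = (cmod (c a b))\<^sup>2" for a b
  define R where "R = U ** spectral_op pi \<psi> ** adjoint_mat U"
  define \<sigma> where "\<sigma> = spectral_op p0 \<phi>"
  define q where "q b = (\<Sum>a\<in>UNIV. pi a * n a b)" for b
  have tauin: "\<tau> \<in> {0..\<tau>}" using tau by simp
  have onb_chi: "orthonormal_basis V"
    using onb_psi prop_unitary[OF U_prop H_herm tauin]
    by (simp add: orthonormal_basis_def V_def U_def)
  have trev: "cinner (\<Theta> (\<psi> a)) (Utf \<tau> *v \<Theta> (\<phi> b)) = c a b" for a b
  proof -
    have "cinner (\<Theta> (\<psi> a)) (Utf \<tau> *v \<Theta> (\<phi> b))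
        = cinner (\<Theta> (\<psi> a)) (\<Theta> (\<Theta> (Utf \<tau> *v \<Theta> (\<phi> b))))"
      using Theta_sq by simp
    also have "\<dots> = cnj (cinner (\<psi> a) (\<Theta> (Utf \<tau> *v \<Theta> (\<phi> b))))"
      by (rule anti_inner[OF Theta])
    also have "\<dots> = cnj (cinner (V a) (\<phi> b))"
      using time_rev[OF U_prop H_herm Theta Theta_sq Ut_prop tau] by (simp add: V_def U_def)
    finally show ?thesis by (simp add: c_def cinner_cnj)
  qed
  have LHS: "(\<Sum>a\<in>UNIV. \<Sum>b\<in>UNIV.
            kl_term ((cmod (cinner (\<phi> b) (Uf \<tau> *v \<psi> a)))\<^sup>2 * pi a)
                    ((cmod (cinner (\<Theta> (\<psi> a)) (Utf \<tau> *v \<Theta> (\<phi> b))))\<^sup>2 * p0 b))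
      = (\<Sum>a\<in>UNIV. \<Sum>b\<in>UNIV. kl_term (n a b * pi a) (n a b * p0 b))"
    by (simp add: trev n_def c_def V_def U_def)
  have R: "R = spectral_op pi V" unfolding R_def V_def by (rule conj_spectral)
  have Rphi: "cinner (\<phi> b) (R *v \<phi> b) = of_real (q b)" for b
  proof -
    have "cinner (\<phi> b) (R *v \<phi> b) = (\<Sum>a\<in>UNIV. of_real (pi a) * (cinner (V a) (\<phi> b) * cnj (cinner (V a) (\<phi> b))))"
      unfolding R by (simp add: spectral_mv cinner_sum_right cinner_smult_right cinner_cnj mult_ac)
    also have "\<dots> = of_real (q b)"
      unfolding q_def n_def c_def of_real_sum
      by (simp only: complex_norm_square[symmetric] of_real_mult) (metis cinner_cnj complex_mod_cnj)
    finally show ?thesis .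
  qed
  have parse: "(\<Sum>b\<in>UNIV. n a b) = 1" for a
  proof -
    have "complex_of_real (\<Sum>b\<in>UNIV. n a b) = cinner (V a) (V a)"
      unfolding n_def c_def by (rule parseval[OF onb_phi])
    also have "\<dots> = 1" using onb_chi by (simp add: orthonormal_basis_def)
    finally show ?thesis by (metis of_real_eq_1_iff)
  qed
  have n_nonneg: "n a b \<ge> 0" for a b by (simp add: n_def)
  have sig_eig: "\<sigma> *v \<phi> k = of_real (p0 k) *s \<phi> k" for k
    unfolding \<sigma>_def by (rule spectral_eigen[OF onb_phi])
  have R_eig: "R *v V k = of_real (pi k) *s V k" for k
    unfolding R by (rule spectral_eigen[OF onb_chi])
  have RHS_eq: "rel_entropy (Uf \<tau> ** spectral_op pi \<psi> ** adjoint_mat (Uf \<tau>)) (spectral_op p0 \<phi>)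
      = rel_entropy R \<sigma>" by (simp add: R_def \<sigma>_def U_def)
  show ?thesis
  proof (cases "\<exists>a b. pi a \<noteq> 0 \<and> c a b \<noteq> 0 \<and> p0 b = 0")
    case True
    then obtain a b where ab: "pi a \<noteq> 0" "c a b \<noteq> 0" "p0 b = 0" by blast
    have "pi a * n a b \<le> q b"
      unfolding q_def by (rule member_le_sum) (auto intro!: mult_nonneg_nonneg simp: pi_nonneg n_nonneg)
    moreover have "pi a * n a b > 0" using ab pi_nonneg by (simp add: n_def less_le)
    ultimately have "q b > 0" by linarith
    then have "\<exists>\<psi>. \<sigma> *v \<psi> = 0 \<and> cinner \<psi> (R *v \<psi>) \<noteq> 0"
      using Rphi[of b] sig_eig[of b] ab by (intro exI[of _ "\<phi> b"]) simp
    then have r: "rel_entropy R \<sigma> = \<infinity>" by (simp add: rel_entropy_def)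
    have "kl_term (n a b * pi a) (n a b * p0 b) = \<infinity>"
      using ab by (simp add: kl_term_def n_def)
    then have "(\<Sum>a\<in>UNIV. \<Sum>b\<in>UNIV. kl_term (n a b * pi a) (n a b * p0 b)) = \<infinity>"
      by (auto simp: sum_Pinfty)
    then show ?thesis using LHS RHS_eq r by simp
  next
    case False
    have nocond: "\<not> (\<exists>\<psi>. \<sigma> *v \<psi> = 0 \<and> cinner \<psi> (R *v \<psi>) \<noteq> 0)"
    proof
      assume "\<exists>\<psi>. \<sigma> *v \<psi> = 0 \<and> cinner \<psi> (R *v \<psi>) \<noteq> 0"
      then obtain w where w: "\<sigma> *v w = 0" "cinner w (R *v w) \<noteq> 0" by blast
      have "cinner w (R *v w) = (\<Sum>a\<in>UNIV. (of_real (pi a) * cinner (V a) w) * cinner w (V a))"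
        unfolding R by (simp add: spectral_mv cinner_sum_right cinner_smult_right)
      then obtain a where a: "pi a \<noteq> 0" "cinner (V a) w \<noteq> 0"
        using w(2) by (metis (no_types, lifting) mult_eq_0_iff of_real_0 sum.neutral)
      have "cinner (V a) w = cinner (V a) (\<Sum>b\<in>UNIV. cinner (\<phi> b) w *s \<phi> b)"
        using onb_expand[OF onb_phi, of w] by simp
      also have "\<dots> = (\<Sum>b\<in>UNIV. cinner (\<phi> b) w * cinner (V a) (\<phi> b))"
        by (simp add: cinner_sum_right cinner_smult_right)
      finally obtain b where b: "cinner (\<phi> b) w \<noteq> 0" "cinner (V a) (\<phi> b) \<noteq> 0"
        using a(2) by (metis (no_types, lifting) mult_eq_0_iff sum.neutral)
      have "of_real (p0 b) * cinner (\<phi> b) w = cinner (\<phi> b) (\<sigma> *v w)"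
        unfolding \<sigma>_def by (rule spectral_inner[OF onb_phi, symmetric])
      then have "p0 b = 0" using w(1) b(1) by simp
      moreover have "c a b \<noteq> 0" using b(2) unfolding c_def by (metis cinner_cnj complex_cnj_zero)
      ultimately show False using False a(1) by blast
    qed
    have mf1: "mfun (\<lambda>x. x * ln x) R = spectral_op (\<lambda>k. pi k * ln (pi k)) V"
      by (rule mfun_eq[OF onb_chi R_eig])
    have mf2: "mfun ln \<sigma> = spectral_op (\<lambda>k. ln (p0 k)) \<phi>"
      by (rule mfun_eq[OF onb_phi sig_eig])
    have r: "rel_entropy R \<sigma> = ereal ((\<Sum>a\<in>UNIV. pi a * ln (pi a)) - (\<Sum>b\<in>UNIV. ln (p0 b) * q b))"
      using nocond unfolding rel_entropy_def mf1 mf2 ctrace_spectral[OF onb_chi] ctrace_mul_spectral Rphi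
      by simp
    have terms: "kl_term (n a b * pi a) (n a b * p0 b) = ereal (n a b * pi a * ln (pi a) - n a b * pi a * ln (p0 b))"
      for a b
      by (rule kl_fin) (use pi_nonneg p0_nonneg n_nonneg False in \<open>auto simp: n_def\<close>)
    have s1: "(\<Sum>a\<in>UNIV. \<Sum>b\<in>UNIV. n a b * pi a * ln (pi a) - n a b * pi a * ln (p0 b))
        = (\<Sum>a\<in>UNIV. \<Sum>b\<in>UNIV. n a b * pi a * ln (pi a)) - (\<Sum>a\<in>UNIV. \<Sum>b\<in>UNIV. n a b * pi a * ln (p0 b))"
      by (simp only: sum_subtractf)
    have s2: "(\<Sum>a\<in>UNIV. \<Sum>b\<in>UNIV. n a b * pi a * ln (pi a)) = (\<Sum>a\<in>UNIV. pi a * ln (pi a))"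
    proof (rule sum.cong[OF refl])
      fix a
      have "(\<Sum>b\<in>UNIV. n a b * pi a * ln (pi a)) = (\<Sum>b\<in>UNIV. n a b) * (pi a * ln (pi a))"
        by (simp add: sum_distrib_right mult.assoc)
      then show "(\<Sum>b\<in>UNIV. n a b * pi a * ln (pi a)) = pi a * ln (pi a)" by (simp add: parse)
    qed
    have s3: "(\<Sum>a\<in>UNIV. \<Sum>b\<in>UNIV. n a b * pi a * ln (p0 b)) = (\<Sum>b\<in>UNIV. \<Sum>a\<in>UNIV. n a b * pi a * ln (p0 b))"
      by (rule sum.swap)
    have s4: "(\<Sum>b\<in>UNIV. \<Sum>a\<in>UNIV. n a b * pi a * ln (p0 b)) = (\<Sum>b\<in>UNIV. ln (p0 b) * q b)"
    proof (rule sum.cong[OF refl])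
      fix b
      show "(\<Sum>a\<in>UNIV. n a b * pi a * ln (p0 b)) = ln (p0 b) * q b"
        unfolding q_def sum_distrib_left by (rule sum.cong[OF refl]) (simp add: mult_ac)
    qed
    have "(\<Sum>a\<in>UNIV. \<Sum>b\<in>UNIV. n a b * pi a * ln (pi a) - n a b * pi a * ln (p0 b))
        = (\<Sum>a\<in>UNIV. pi a * ln (pi a)) - (\<Sum>b\<in>UNIV. ln (p0 b) * q b)"
      using s1 s2 s3 s4 by simp
    then show ?thesis using LHS RHS_eq r terms by simp
  qed
qed

end
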